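(* Let $\alpha\in(0,\pi)$, $a\in A_N$, $d\in\{\pm1\}^N$, $\gamma_n=d_n-\cos\alpha$, $\mu^*_{a,d}=\sum_{n=1}^N\gamma_n\mu_{a_n}$, and \[ \lambda_n=\gamma_n\log(2-2a_n^2)+\sum_{k\ne n}\gamma_k\mu_{a_k}(a_n),\qquad n=1,\dots,N. \] Then there exists a constant $C=C(a)>0$ such that \[ \Big|\mu^*_{a,d}(a_n\pm r)-\lambda_n-\gamma_n\log\frac1r\Big|\le Cr \] for all $r\in(0,\rho(a)]$ and all $n=1,\dots,N$.
   Context: $A_N=\{a\in(-1,1)^N:-1<a_1<\dots<a_N<1\}$; $\rho(a)=\frac12\min\{2a_1+2,a_2-a_1,\dots,a_N-a_{N-1},2-2a_N\}$. Let $\mu(x_1)=\log(1+\sqrt{1-x_1^2})-\log|x_1|$ for $x_1\in(-1,1)\setminus\{0\}$ and, for $b\in(-1,1)$, $\mu_b(x_1)=\mu\big(\frac{x_1-b}{1-bx_1}\big)$ for $x_1\in(-1,1)\setminus\{b\}$. *)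

theory Defs
  imports Complex_Main
begin

text \<open>Points are indexed 1..N: a :: nat \<Rightarrow> real, only a 1, ..., a N matter.\<close>

definition in_A :: "nat \<Rightarrow> (nat \<Rightarrow> real) \<Rightarrow> bool" where
  "in_A N a \<longleftrightarrow> (\<forall>k\<in>{1..N}. -1 < a k \<and> a k < 1) \<and> (\<forall>k. 1 \<le> k \<and> k < N \<longrightarrow> a k < a (Suc k))"

definition rho :: "nat \<Rightarrow> (nat \<Rightarrow> real) \<Rightarrow> real" where
  "rho N a = (1/2) * Min ({2 * a 1 + 2, 2 - 2 * a N} \<union> {a (Suc k) - a k | k. 1 \<le> k \<and> k < N})"

definition mu :: "real \<Rightarrow> real" where
  "mu x = ln (1 + sqrt (1 - x\<^sup>2)) - ln \<bar>x\<bar>"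

definition mu_b :: "real \<Rightarrow> real \<Rightarrow> real" where
  "mu_b b x = mu ((x - b) / (1 - b * x))"

end

theory Submission
  imports Defs
begin

lemma ln_diff_le:
  fixes u v m :: real
  assumes "0 < m" "m \<le> u" "m \<le> v"
  shows "\<bar>ln u - ln v\<bar> \<le> \<bar>u - v\<bar> / m"
proof -
  have key: "ln p - ln q \<le> (p - q) / m" if "m \<le> p" "m \<le> q" "q \<le> p" for p q :: real
  proof -
    have "ln p - ln q = ln (p / q)" using that assms by (simp add: ln_div)
    also have "\<dots> \<le> p / q - 1" using that assms by (intro ln_le_minus_one) simp
    also have "\<dots> = (p - q) / q" using that assms by (simp add: field_simps)
    also have "\<dots> \<le> (p - q) / m" using that assms by (intro divide_left_mono) auto
    finally show ?thesis .
  qed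
  show ?thesis
  proof (cases "v \<le> u")
    case True
    have "ln v \<le> ln u" using True assms by simp
    then show ?thesis using key[of u v] True assms by simp
  next
    case False
    have "ln u \<le> ln v" using False assms by simp
    then show ?thesis using key[of v u] False assms by simp
  qed
qed

lemma sqrt_diff_le:
  fixes p q m :: real
  assumes "0 < m" "m \<le> p" "m \<le> q"
  shows "\<bar>sqrt p - sqrt q\<bar> \<le> \<bar>p - q\<bar> / sqrt m"
proof -
  have sp: "sqrt m \<le> sqrt p" "sqrt m \<le> sqrt q" using assms by auto
  have pos: "0 < sqrt m" using assms by simp
  have "(sqrt p - sqrt q) * (sqrt p + sqrt q) = p - q" using assms
    by (simp add: algebra_simps)
  hence "\<bar>sqrt p - sqrt q\<bar> * (sqrt p + sqrt q) = \<bar>p - q\<bar>"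
    using sp pos by (metis abs_mult abs_of_nonneg add_nonneg_nonneg less_le_trans less_imp_le)
  moreover have "\<bar>sqrt p - sqrt q\<bar> * sqrt m \<le> \<bar>sqrt p - sqrt q\<bar> * (sqrt p + sqrt q)"
  proof (intro mult_left_mono)
    have "0 \<le> sqrt q" using assms by simp
    thus "sqrt m \<le> sqrt p + sqrt q" using sp by linarith
  qed simp
  ultimately have "\<bar>sqrt p - sqrt q\<bar> * sqrt m \<le> \<bar>p - q\<bar>" by simp
  thus ?thesis using pos by (simp add: field_simps)
qed

lemma mob_den:
  fixes b y :: real
  assumes "\<bar>b\<bar> < 1" "\<bar>y\<bar> \<le> 1"
  shows "1 - \<bar>b\<bar> \<le> 1 - b * y"
proof -
  have "b * y \<le> \<bar>b * y\<bar>" by (rule abs_ge_self)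
  also have "\<bar>b * y\<bar> = \<bar>b\<bar> * \<bar>y\<bar>" by (rule abs_mult)
  also have "\<bar>b\<bar> * \<bar>y\<bar> \<le> \<bar>b\<bar> * 1" using assms by (intro mult_left_mono) auto
  finally show ?thesis by linarith
qed

lemma mob_abs:
  fixes b y :: real
  assumes "\<bar>b\<bar> < 1" "\<bar>y\<bar> \<le> 1"
  shows "\<bar>(y - b) / (1 - b * y)\<bar> \<le> 1"
proof -
  have d: "0 < 1 - b * y" using mob_den[OF assms] assms by linarith
  have e: "(1 - b*y)^2 - (y - b)^2 = (1 - b^2) * (1 - y^2)" by algebra
  have b2: "b^2 \<le> 1" using assms(1) by (simp add: abs_square_le_1)
  have y2: "y^2 \<le> 1" using assms(2) by (simp add: abs_square_le_1)
  have "0 \<le> (1 - b^2) * (1 - y^2)" using b2 y2 by (intro mult_nonneg_nonneg) auto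
  hence "(y - b)^2 \<le> (1 - b*y)^2" using e by linarith
  hence "sqrt ((y - b)^2) \<le> sqrt ((1 - b*y)^2)" by (rule real_sqrt_le_mono)
  hence h: "\<bar>y - b\<bar> \<le> 1 - b*y" using d by simp
  have "\<bar>(y - b) / (1 - b * y)\<bar> = \<bar>y - b\<bar> / (1 - b * y)" using d by (simp only: abs_divide abs_of_pos)
  also have "\<dots> \<le> 1" using h d by simp
  finally show ?thesis .
qed

lemma h_bound:
  fixes t :: real
  assumes "\<bar>t\<bar> \<le> 1"
  shows "0 \<le> ln (1 + sqrt (1 - t^2))" "ln (1 + sqrt (1 - t^2)) \<le> 1"
proof -
  have t2: "t^2 \<le> 1" using assms by (simp add: abs_square_le_1)
  hence s: "0 \<le> sqrt (1 - t^2)" "sqrt (1 - t^2) \<le> 1" by auto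
  show "0 \<le> ln (1 + sqrt (1 - t^2))" using s by simp
  have "ln (1 + sqrt (1 - t^2)) \<le> 1 + sqrt (1 - t^2) - 1" by (intro ln_le_minus_one) (use s in linarith)
  thus "ln (1 + sqrt (1 - t^2)) \<le> 1" using s by linarith
qed

lemma sqrt_ge_self:
  fixes z :: real assumes "0 \<le> z" "z \<le> 1" shows "z \<le> sqrt z"
proof -
  have "sqrt z \<le> 1" using assms by simp
  hence "sqrt z * sqrt z \<le> sqrt z" using assms by (intro mult_left_le) auto
  moreover have "sqrt z * sqrt z = z" using assms by simp
  ultimately show ?thesis by linarith
qed

lemma self_term:
  fixes b r s :: real
  assumes b: "\<bar>b\<bar> < 1" and r: "0 < r" "r \<le> 1 - \<bar>b\<bar>" and s: "s = 1 \<or> s = -1"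
  shows "\<bar>mu_b b (b + s * r) - ln (2 - 2 * b\<^sup>2) - ln (1 / r)\<bar> \<le> 2 * r / (1 - \<bar>b\<bar>)"
proof -
  define y where "y = b + s * r"
  define D where "D = 1 - b * y"
  define x where "x = (y - b) / D"
  have y1: "\<bar>y\<bar> \<le> 1" using s b r unfolding y_def by auto
  have Dge: "1 - \<bar>b\<bar> \<le> D" unfolding D_def using mob_den[OF b y1] .
  have bpos: "0 < 1 - \<bar>b\<bar>" using b by simp
  have Dpos: "0 < D" using Dge bpos by linarith
  have x1: "\<bar>x\<bar> \<le> 1" unfolding x_def D_def using mob_abs[OF b y1] .
  have xs: "x = (s * r) / D" unfolding x_def y_def by simp
  have sr: "\<bar>s * r\<bar> = r" using s r by auto
  have ax: "\<bar>x\<bar> = r / D" using Dpos by (simp only: xs abs_divide abs_of_pos sr)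
  have axb: "\<bar>x\<bar> \<le> r / (1 - \<bar>b\<bar>)" unfolding ax using r Dge bpos
    by (intro divide_left_mono) auto
  have x2: "x^2 \<le> 1" using x1 by (simp add: abs_square_le_1)
  have "x^2 = \<bar>x\<bar> * \<bar>x\<bar>" by (metis abs_mult_self_eq power2_eq_square)
  also have "\<dots> \<le> \<bar>x\<bar>" using mult_left_le[OF x1 abs_ge_zero] .
  finally have x2x: "x^2 \<le> \<bar>x\<bar>" .
  have sq: "1 - x^2 \<le> sqrt (1 - x^2)" using x2 by (intro sqrt_ge_self) auto
  have sq1: "sqrt (1 - x^2) \<le> 1" using x2 by simp
  have sq0: "0 \<le> sqrt (1 - x^2)" using x2 by simp
  have P1: "\<bar>ln (1 + sqrt (1 - x^2)) - ln 2\<bar> \<le> r / (1 - \<bar>b\<bar>)"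
  proof -
    have "\<bar>ln (1 + sqrt (1 - x^2)) - ln 2\<bar> \<le> \<bar>(1 + sqrt (1 - x^2)) - 2\<bar> / 1"
      using sq0 by (intro ln_diff_le) auto
    also have "\<dots> \<le> x^2" using sq sq1 by simp
    finally show ?thesis using x2x axb by linarith
  qed
  have bb: "b^2 \<le> \<bar>b\<bar>"
  proof -
    have "b^2 = \<bar>b\<bar> * \<bar>b\<bar>" by (metis abs_mult_self_eq power2_eq_square)
    also have "\<dots> \<le> \<bar>b\<bar>" using b by (intro mult_left_le) auto
    finally show ?thesis .
  qed
  have P2: "\<bar>ln D - ln (1 - b^2)\<bar> \<le> r / (1 - \<bar>b\<bar>)"
  proof -
    have "\<bar>ln D - ln (1 - b^2)\<bar> \<le> \<bar>D - (1 - b^2)\<bar> / (1 - \<bar>b\<bar>)"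
      using Dge bb bpos by (intro ln_diff_le) auto
    also have "\<bar>D - (1 - b^2)\<bar> = \<bar>b\<bar> * r" unfolding D_def y_def using s r
      by (auto simp: algebra_simps power2_eq_square abs_mult)
    also have "\<bar>b\<bar> * r / (1 - \<bar>b\<bar>) \<le> r / (1 - \<bar>b\<bar>)" using b r bpos
      by (intro divide_right_mono) (auto simp: mult_left_le_one_le)
    finally show ?thesis .
  qed
  have xne: "x \<noteq> 0" using ax r Dpos by auto
  have "mu_b b (b + s * r) = ln (1 + sqrt (1 - x^2)) - ln \<bar>x\<bar>"
    unfolding mu_b_def mu_def x_def D_def y_def by simp
  also have "ln \<bar>x\<bar> = ln r - ln D" unfolding ax using r Dpos by (simp add: ln_div)
  finally have e1: "mu_b b (b + s * r) = ln (1 + sqrt (1 - x^2)) - (ln r - ln D)" .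
  have e2: "ln (2 - 2 * b\<^sup>2) = ln 2 + ln (1 - b^2)"
  proof -
    have "1 - b^2 > 0" using bb b by linarith
    hence "ln (2 * (1 - b^2)) = ln 2 + ln (1 - b^2)" by (subst ln_mult) auto
    moreover have "2 - 2 * b\<^sup>2 = 2 * (1 - b^2)" by (simp add: algebra_simps)
    ultimately show ?thesis by metis
  qed
  have e3: "ln (1 / r) = - ln r" using r by (simp add: ln_div)
  have "mu_b b (b + s * r) - ln (2 - 2 * b\<^sup>2) - ln (1 / r)
     = (ln (1 + sqrt (1 - x^2)) - ln 2) + (ln D - ln (1 - b^2))"
    unfolding e1 e2 e3 by simp
  hence "\<bar>mu_b b (b + s * r) - ln (2 - 2 * b\<^sup>2) - ln (1 / r)\<bar> \<le> r / (1 - \<bar>b\<bar>) + r / (1 - \<bar>b\<bar>)"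
    using P1 P2 by linarith
  thus ?thesis by simp
qed

lemma one_minus_t2:
  fixes b y d :: real
  assumes b: "\<bar>b\<bar> < 1" and d: "0 < d" and y: "\<bar>y\<bar> \<le> 1 - d"
  shows "d * (1 - b^2) / 4 \<le> 1 - ((y - b) / (1 - b * y))^2"
proof -
  have y1: "\<bar>y\<bar> \<le> 1" using y d by linarith
  define D where "D = 1 - b * y"
  have Dge: "1 - \<bar>b\<bar> \<le> D" unfolding D_def by (rule mob_den[OF b y1])
  have Dpos: "0 < D" using Dge b by linarith
  have "b * y \<ge> - \<bar>b * y\<bar>" by simp
  moreover have "\<bar>b * y\<bar> \<le> 1" using b y1 by (simp add: abs_mult mult_le_one)
  ultimately have D2: "D \<le> 2" unfolding D_def by linarith
  have "D^2 \<le> 2^2" using D2 Dpos by (intro power_mono) auto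
  hence D4: "D^2 \<le> 4" by simp
  have e1: "1 - ((y - b) / D)^2 = (D^2 - (y - b)^2) / D^2"
    using Dpos by (simp add: field_simps)
  have e2: "D^2 - (y - b)^2 = (1 - b^2) * (1 - y^2)" unfolding D_def by (simp add: algebra_simps power2_eq_square)
  have e: "1 - ((y - b) / D)^2 = (1 - b^2) * (1 - y^2) / D^2" using e1 e2 by simp
  have b2: "0 \<le> 1 - b^2" using b by (simp add: abs_square_le_1 less_imp_le)
  have "1 - y^2 = (1 - \<bar>y\<bar>) * (1 + \<bar>y\<bar>)" by (simp add: algebra_simps power2_eq_square abs_mult_self_eq)
  also have "\<dots> \<ge> (1 - \<bar>y\<bar>) * 1" using y d by (intro mult_left_mono) auto
  finally have y2: "d \<le> 1 - y^2" using y by simp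
  have "d * (1 - b^2) / 4 \<le> (1 - y^2) * (1 - b^2) / 4" using y2 b2 by (intro divide_right_mono mult_right_mono) auto
  also have "\<dots> \<le> (1 - y^2) * (1 - b^2) / D^2" using D4 Dpos y2 d b2
    by (intro divide_left_mono mult_nonneg_nonneg) auto
  also have "\<dots> = 1 - ((y - b) / D)^2" using e by (simp add: mult.commute)
  finally show ?thesis unfolding D_def .
qed

lemma t_diff:
  fixes b y c :: real
  assumes b: "\<bar>b\<bar> < 1" and y1: "\<bar>y\<bar> \<le> 1" and c1: "\<bar>c\<bar> \<le> 1"
  shows "\<bar>(y - b) / (1 - b * y) - (c - b) / (1 - b * c)\<bar> \<le> \<bar>y - c\<bar> / (1 - \<bar>b\<bar>)^2"
proof -
  define D where "D = 1 - b * y"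
  define E where "E = 1 - b * c"
  have Dge: "1 - \<bar>b\<bar> \<le> D" unfolding D_def by (rule mob_den[OF b y1])
  have Ege: "1 - \<bar>b\<bar> \<le> E" unfolding E_def by (rule mob_den[OF b c1])
  have bp: "0 < 1 - \<bar>b\<bar>" using b by simp
  have Dpos: "0 < D" "0 < E" using Dge Ege bp by linarith+
  have "(y - b) / D - (c - b) / E = (y - c) * (1 - b^2) / (D * E)"
    using Dpos unfolding D_def E_def by (simp add: field_simps power2_eq_square)
  hence "\<bar>(y - b) / D - (c - b) / E\<bar> = \<bar>y - c\<bar> * \<bar>1 - b^2\<bar> / (D * E)"
    using Dpos by (simp add: abs_mult)
  also have "\<bar>1 - b^2\<bar> \<le> 1" using b by (simp add: abs_square_le_1 less_imp_le)
  hence "\<bar>y - c\<bar> * \<bar>1 - b^2\<bar> / (D * E) \<le> \<bar>y - c\<bar> / (D * E)"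
    using Dpos by (intro divide_right_mono mult_left_le) auto
  also have "\<dots> \<le> \<bar>y - c\<bar> / (1 - \<bar>b\<bar>)^2"
    using Dge Ege bp by (intro divide_left_mono) (auto simp: power2_eq_square intro: mult_mono)
  finally show ?thesis unfolding D_def E_def .
qed

definition Kf :: "real \<Rightarrow> real \<Rightarrow> real" where
  "Kf b p = 3 / p + 1 / (1 - \<bar>b\<bar>) + 2 / ((1 - \<bar>b\<bar>)^2 * sqrt (p * (1 - b^2) / 8))"

lemma Kf_nonneg: assumes "\<bar>b\<bar> < 1" "0 < p" shows "0 \<le> Kf b p"
proof -
  have "0 \<le> 1 - b^2" using assms by (simp add: abs_square_le_1 less_imp_le)
  thus ?thesis using assms unfolding Kf_def by (intro add_nonneg_nonneg divide_nonneg_nonneg mult_nonneg_nonneg) auto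
qed

lemma cross_term:
  fixes b c p r s :: real
  assumes b: "\<bar>b\<bar> < 1" and p: "0 < p" and gap: "2 * p \<le> \<bar>c - b\<bar>" and cb: "\<bar>c\<bar> + p \<le> 1"
    and r: "0 < r" "r \<le> p" and s: "s = 1 \<or> s = -1"
  shows "\<bar>mu_b b (c + s * r) - mu_b b c\<bar> \<le> Kf b p * r"
proof -
  define y where "y = c + s * r"
  have yc: "\<bar>y - c\<bar> = r" unfolding y_def using s r by auto
  have y1: "\<bar>y\<bar> \<le> 1" using yc cb r by linarith
  have c1: "\<bar>c\<bar> \<le> 1" using cb p by linarith
  define D where "D = 1 - b * y"
  define E where "E = 1 - b * c"
  have Dge: "1 - \<bar>b\<bar> \<le> D" unfolding D_def by (rule mob_den[OF b y1])
  have Ege: "1 - \<bar>b\<bar> \<le> E" unfolding E_def by (rule mob_den[OF b c1])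
  have bp: "0 < 1 - \<bar>b\<bar>" using b by simp
  have Dpos: "0 < D" "0 < E" using Dge Ege bp by linarith+
  define t where "t = (y - b) / D"
  define t' where "t' = (c - b) / E"
  have t1: "\<bar>t\<bar> \<le> 1" unfolding t_def D_def by (rule mob_abs[OF b y1])
  have t1': "\<bar>t'\<bar> \<le> 1" unfolding t'_def E_def by (rule mob_abs[OF b c1])
  have yb: "p \<le> \<bar>y - b\<bar>" using gap yc r by linarith
  have cb': "p \<le> \<bar>c - b\<bar>" using gap p by linarith
  have at: "\<bar>t\<bar> = \<bar>y - b\<bar> / D" unfolding t_def using Dpos by (simp only: abs_divide abs_of_pos)
  have at': "\<bar>t'\<bar> = \<bar>c - b\<bar> / E" unfolding t'_def using Dpos by (simp only: abs_divide abs_of_pos)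
  have lt: "ln \<bar>t\<bar> = ln \<bar>y - b\<bar> - ln D" unfolding at using yb p Dpos by (subst ln_div) auto
  have lt': "ln \<bar>t'\<bar> = ln \<bar>c - b\<bar> - ln E" unfolding at' using cb' p Dpos by (subst ln_div) auto
  have m1: "mu_b b y = ln (1 + sqrt (1 - t^2)) - (ln \<bar>y - b\<bar> - ln D)"
  proof -
    have "mu_b b y = ln (1 + sqrt (1 - t^2)) - ln \<bar>t\<bar>" unfolding mu_b_def mu_def t_def D_def ..
    thus ?thesis unfolding lt .
  qed
  have m2: "mu_b b c = ln (1 + sqrt (1 - t'^2)) - (ln \<bar>c - b\<bar> - ln E)"
  proof -
    have "mu_b b c = ln (1 + sqrt (1 - t'^2)) - ln \<bar>t'\<bar>" unfolding mu_b_def mu_def t'_def E_def ..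
    thus ?thesis unfolding lt' .
  qed
  have P1: "\<bar>ln \<bar>y - b\<bar> - ln \<bar>c - b\<bar>\<bar> \<le> r / p"
  proof -
    have "\<bar>ln \<bar>y - b\<bar> - ln \<bar>c - b\<bar>\<bar> \<le> \<bar>\<bar>y - b\<bar> - \<bar>c - b\<bar>\<bar> / p"
      using yb cb' p by (intro ln_diff_le) auto
    also have "\<bar>\<bar>y - b\<bar> - \<bar>c - b\<bar>\<bar> \<le> r" using yc by linarith
    hence "\<bar>\<bar>y - b\<bar> - \<bar>c - b\<bar>\<bar> / p \<le> r / p" using p by (intro divide_right_mono) auto
    finally show ?thesis .
  qed
  have P2: "\<bar>ln D - ln E\<bar> \<le> r / (1 - \<bar>b\<bar>)"
  proof -
    have "\<bar>ln D - ln E\<bar> \<le> \<bar>D - E\<bar> / (1 - \<bar>b\<bar>)" using Dge Ege bp by (intro ln_diff_le) auto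
    also have "\<bar>D - E\<bar> = \<bar>b\<bar> * r" unfolding D_def E_def
      using yc by (simp add: abs_mult right_diff_distrib[symmetric] abs_minus_commute)
    also have "\<bar>b\<bar> * r / (1 - \<bar>b\<bar>) \<le> r / (1 - \<bar>b\<bar>)" using b r bp
      by (intro divide_right_mono) (auto simp: mult_left_le_one_le)
    finally show ?thesis .
  qed
  define m where "m = p * (1 - b^2) / 8"
  have b2: "0 < 1 - b^2" using b by (simp add: abs_square_le_1 abs_square_less_1)
  have mpos: "0 < m" unfolding m_def using p b2 by simp
  have P3: "\<bar>ln (1 + sqrt (1 - t^2)) - ln (1 + sqrt (1 - t'^2))\<bar> \<le> 2 * r / p + 2 * r / ((1 - \<bar>b\<bar>)^2 * sqrt m)"
  proof (cases "r \<le> p / 2")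
    case True
    have yd: "\<bar>y\<bar> \<le> 1 - p / 2" using yc cb True by linarith
    have cd: "\<bar>c\<bar> \<le> 1 - p / 2" using cb p by linarith
    have mt: "m \<le> 1 - t^2" unfolding m_def t_def D_def using one_minus_t2[OF b _ yd] p by simp
    have mt': "m \<le> 1 - t'^2" unfolding m_def t'_def E_def using one_minus_t2[OF b _ cd] p by simp
    have "\<bar>ln (1 + sqrt (1 - t^2)) - ln (1 + sqrt (1 - t'^2))\<bar>
       \<le> \<bar>(1 + sqrt (1 - t^2)) - (1 + sqrt (1 - t'^2))\<bar> / 1"
      using mt mt' mpos by (intro ln_diff_le) auto
    also have "\<dots> = \<bar>sqrt (1 - t^2) - sqrt (1 - t'^2)\<bar>" by simp
    also have "\<dots> \<le> \<bar>(1 - t^2) - (1 - t'^2)\<bar> / sqrt m"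
      using mt mt' mpos by (intro sqrt_diff_le) auto
    also have "\<bar>(1 - t^2) - (1 - t'^2)\<bar> = \<bar>t - t'\<bar> * \<bar>t + t'\<bar>"
      by (simp add: abs_mult[symmetric] power2_eq_square algebra_simps)
    also have "\<bar>t - t'\<bar> \<le> r / (1 - \<bar>b\<bar>)^2"
      using t_diff[OF b y1 c1] yc unfolding t_def t'_def D_def E_def by simp
    hence "\<bar>t - t'\<bar> * \<bar>t + t'\<bar> \<le> r / (1 - \<bar>b\<bar>)^2 * 2"
      using t1 t1' by (intro mult_mono) auto
    hence "\<bar>t - t'\<bar> * \<bar>t + t'\<bar> / sqrt m \<le> r / (1 - \<bar>b\<bar>)^2 * 2 / sqrt m"
      using mpos by (intro divide_right_mono) auto
    also have "\<dots> = 2 * r / ((1 - \<bar>b\<bar>)^2 * sqrt m)" by simp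
    finally show ?thesis using p r by (smt (verit) divide_nonneg_nonneg)
  next
    case False
    have "\<bar>ln (1 + sqrt (1 - t^2)) - ln (1 + sqrt (1 - t'^2))\<bar> \<le> 1"
      using h_bound[OF t1] h_bound[OF t1'] by linarith
    also have "1 \<le> 2 * r / p" using False p by (simp add: field_simps)
    finally have "\<bar>ln (1 + sqrt (1 - t^2)) - ln (1 + sqrt (1 - t'^2))\<bar> \<le> 2 * r / p" .
    moreover have "0 \<le> 2 * r / ((1 - \<bar>b\<bar>)^2 * sqrt m)" using r mpos by simp
    ultimately show ?thesis by linarith
  qed
  have "mu_b b (c + s * r) - mu_b b c = (ln (1 + sqrt (1 - t^2)) - ln (1 + sqrt (1 - t'^2)))
        - (ln \<bar>y - b\<bar> - ln \<bar>c - b\<bar>) + (ln D - ln E)"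
    using m1 m2 unfolding y_def by simp
  hence "\<bar>mu_b b (c + s * r) - mu_b b c\<bar> \<le> 2 * r / p + 2 * r / ((1 - \<bar>b\<bar>)^2 * sqrt m) + r / p + r / (1 - \<bar>b\<bar>)"
    using P1 P2 P3 by linarith
  also have "\<dots> = Kf b p * r" unfolding Kf_def m_def by (simp add: field_simps)
  finally show ?thesis .
qed

lemma rho_facts:
  assumes A: "in_A N a" and N: "1 \<le> N"
  shows "0 < rho N a" "rho N a \<le> 1 + a 1" "rho N a \<le> 1 - a N"
    "\<And>k. 1 \<le> k \<Longrightarrow> k < N \<Longrightarrow> 2 * rho N a \<le> a (Suc k) - a k"
proof -
  define S where "S = {2 * a 1 + 2, 2 - 2 * a N} \<union> {a (Suc k) - a k | k. 1 \<le> k \<and> k < N}"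
  have r: "rho N a = (1/2) * Min S" unfolding rho_def S_def ..
  have "{a (Suc k) - a k | k. 1 \<le> k \<and> k < N} = (\<lambda>k. a (Suc k) - a k) ` {1..<N}" by auto
  hence fin: "finite S" unfolding S_def by simp
  have ne: "S \<noteq> {}" unfolding S_def by simp
  have a1: "-1 < a 1" "a N < 1" using A N unfolding in_A_def by auto
  have "\<forall>x\<in>S. 0 < x" unfolding S_def using a1 A unfolding in_A_def by auto
  hence "0 < Min S" using fin ne by simp
  thus "0 < rho N a" unfolding r by simp
  have "Min S \<le> 2 * a 1 + 2" using fin unfolding S_def by (intro Min_le) auto
  thus "rho N a \<le> 1 + a 1" unfolding r by simp
  have "Min S \<le> 2 - 2 * a N" using fin unfolding S_def by (intro Min_le) auto
  thus "rho N a \<le> 1 - a N" unfolding r by simp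
  fix k assume "1 \<le> k" "k < N"
  hence "Min S \<le> a (Suc k) - a k" using fin unfolding S_def by (intro Min_le) auto
  thus "2 * rho N a \<le> a (Suc k) - a k" unfolding r by simp
qed

lemma gap_facts:
  assumes A: "in_A N a" and N: "1 \<le> N"
  shows "\<And>i j. 1 \<le> i \<Longrightarrow> i < j \<Longrightarrow> j \<le> N \<Longrightarrow> 2 * rho N a \<le> a j - a i"
proof -
  fix i j :: nat
  assume i: "1 \<le> i" and ij: "i < j" and jN: "j \<le> N"
  show "2 * rho N a \<le> a j - a i" using ij jN
  proof (induction j)
    case 0 then show ?case by simp
  next
    case (Suc j)
    have g: "2 * rho N a \<le> a (Suc j) - a j" using rho_facts(4)[OF A N, of j] Suc.prems i by auto
    show ?case
    proof (cases "i = j")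
      case True then show ?thesis using g by simp
    next
      case False
      hence "2 * rho N a \<le> a j - a i" using Suc by auto
      moreover have "0 < rho N a" using rho_facts(1)[OF A N] .
      ultimately show ?thesis using g by linarith
    qed
  qed
qed

theorem proposition2p8:
  fixes \<alpha> :: real and N :: nat and a d \<gamma> lam :: "nat \<Rightarrow> real" and mustar :: "real \<Rightarrow> real"
  assumes "0 < \<alpha>" "\<alpha> < pi"
    and "in_A N a"
    and "\<forall>n\<in>{1..N}. d n = 1 \<or> d n = -1"
    and "\<And>n. \<gamma> n = d n - cos \<alpha>"
    and "\<And>x. mustar x = (\<Sum>n=1..N. \<gamma> n * mu_b (a n) x)"
    and "\<And>n. lam n = \<gamma> n * ln (2 - 2 * (a n)\<^sup>2) + (\<Sum>k\<in>{1..N} - {n}. \<gamma> k * mu_b (a k) (a n))"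
  shows "\<exists>C>0. \<forall>r. 0 < r \<and> r \<le> rho N a \<longrightarrow> (\<forall>n\<in>{1..N}.
           \<bar>mustar (a n + r) - lam n - \<gamma> n * ln (1 / r)\<bar> \<le> C * r \<and>
           \<bar>mustar (a n - r) - lam n - \<gamma> n * ln (1 / r)\<bar> \<le> C * r)"
proof (cases "N = 0")
  case True
  then show ?thesis by (intro exI[of _ 1]) auto
next
  case False
  hence N: "1 \<le> N" by simp
  note A = assms(3)
  define p where "p = rho N a"
  have p0: "0 < p" unfolding p_def using rho_facts(1)[OF A N] .
  have pa1: "p \<le> 1 + a 1" unfolding p_def using rho_facts(2)[OF A N] .
  have paN: "p \<le> 1 - a N" unfolding p_def using rho_facts(3)[OF A N] .
  have ab: "\<bar>a k\<bar> < 1" if "k \<in> {1..N}" for k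
  proof -
    have "-1 < a k \<and> a k < 1" using A that unfolding in_A_def by blast
    thus ?thesis by linarith
  qed
  have gapij: "\<And>i j. 1 \<le> i \<Longrightarrow> i < j \<Longrightarrow> j \<le> N \<Longrightarrow> 2 * p \<le> a j - a i"
    unfolding p_def using gap_facts[OF A N] by blast
  have gap: "\<And>n k. n \<in> {1..N} \<Longrightarrow> k \<in> {1..N} \<Longrightarrow> k \<noteq> n \<Longrightarrow> 2 * p \<le> \<bar>a n - a k\<bar>"
  proof -
    fix n k assume n: "n \<in> {1..N}" and k: "k \<in> {1..N}" and kn: "k \<noteq> n"
    show "2 * p \<le> \<bar>a n - a k\<bar>"
    proof (cases "k < n")
      case True then show ?thesis using gapij[of k n] n k by auto
    next
      case False then have "n < k" using kn by simp
      then show ?thesis using gapij[of n k] n k by auto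
    qed
  qed
  have cb: "\<And>n. n \<in> {1..N} \<Longrightarrow> \<bar>a n\<bar> + p \<le> 1"
  proof -
    fix n assume n: "n \<in> {1..N}"
    have "a 1 \<le> a n" using gapij[of 1 n] n p0 by (cases "n = 1") auto
    moreover have "a n \<le> a N" using gapij[of n N] n p0 by (cases "n = N") auto
    ultimately show "\<bar>a n\<bar> + p \<le> 1" using pa1 paN by linarith
  qed
  have g2: "\<And>k. k \<in> {1..N} \<Longrightarrow> \<bar>\<gamma> k\<bar> \<le> 2"
  proof -
    fix k assume "k \<in> {1..N}"
    hence "d k = 1 \<or> d k = -1" using assms(4) by auto
    moreover have "-1 \<le> cos \<alpha>" "cos \<alpha> \<le> 1" by simp_all
    ultimately show "\<bar>\<gamma> k\<bar> \<le> 2" using assms(5)[of k] by linarith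
  qed
  define C where "C = 1 + (\<Sum>k=1..N. 4 / (1 - \<bar>a k\<bar>) + 2 * Kf (a k) p)"
  have terms_nonneg: "\<And>k. k \<in> {1..N} \<Longrightarrow> 0 \<le> 4 / (1 - \<bar>a k\<bar>) + 2 * Kf (a k) p"
    using ab Kf_nonneg p0 by (smt (verit) divide_nonneg_nonneg)
  have Cpos: "0 < C" unfolding C_def using terms_nonneg by (smt (verit) sum_nonneg)
  have main: "\<bar>mustar (a n + s * r) - lam n - \<gamma> n * ln (1 / r)\<bar> \<le> C * r"
    if n: "n \<in> {1..N}" and s: "s = 1 \<or> s = -1" and r: "0 < r" "r \<le> p" for n s r
  proof -
    define x where "x = a n + s * r"
    define R where "R = {1..N} - {n}"
    have fin: "finite R" unfolding R_def by simp
    have "mustar x = \<gamma> n * mu_b (a n) x + (\<Sum>k\<in>R. \<gamma> k * mu_b (a k) x)"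
      unfolding assms(6) R_def using n by (simp add: sum.remove)
    hence eq: "mustar x - lam n - \<gamma> n * ln (1 / r) =
       \<gamma> n * (mu_b (a n) x - ln (2 - 2 * (a n)\<^sup>2) - ln (1 / r))
       + (\<Sum>k\<in>R. \<gamma> k * (mu_b (a k) x - mu_b (a k) (a n)))"
      unfolding assms(7) R_def by (simp add: algebra_simps sum_subtractf)
    have bn: "\<bar>a n\<bar> < 1" using ab n .
    have self: "\<bar>mu_b (a n) x - ln (2 - 2 * (a n)\<^sup>2) - ln (1 / r)\<bar> \<le> 2 * r / (1 - \<bar>a n\<bar>)"
      unfolding x_def using self_term[OF bn r(1) _ s] cb[OF n] r by linarith
    have T1: "\<bar>\<gamma> n * (mu_b (a n) x - ln (2 - 2 * (a n)\<^sup>2) - ln (1 / r))\<bar> \<le> 2 * (2 * r / (1 - \<bar>a n\<bar>))"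
      unfolding abs_mult using g2[OF n] self by (intro mult_mono) auto
    have T2: "\<bar>\<Sum>k\<in>R. \<gamma> k * (mu_b (a k) x - mu_b (a k) (a n))\<bar> \<le> (\<Sum>k\<in>R. 2 * Kf (a k) p * r)"
    proof -
      have "\<bar>\<Sum>k\<in>R. \<gamma> k * (mu_b (a k) x - mu_b (a k) (a n))\<bar> \<le> (\<Sum>k\<in>R. \<bar>\<gamma> k * (mu_b (a k) x - mu_b (a k) (a n))\<bar>)"
        by (rule sum_abs)
      also have "\<dots> \<le> (\<Sum>k\<in>R. 2 * (Kf (a k) p * r))"
      proof (rule sum_mono)
        fix k assume k: "k \<in> R"
        hence kN: "k \<in> {1..N}" and kn: "k \<noteq> n" unfolding R_def by auto
        have "\<bar>mu_b (a k) x - mu_b (a k) (a n)\<bar> \<le> Kf (a k) p * r"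
          unfolding x_def
        proof (rule cross_term[OF ab[OF kN] p0 _ cb[OF n] r s])
          show "2 * p \<le> \<bar>a n - a k\<bar>" using gap[OF n kN kn] .
        qed
        thus "\<bar>\<gamma> k * (mu_b (a k) x - mu_b (a k) (a n))\<bar> \<le> 2 * (Kf (a k) p * r)"
          unfolding abs_mult using g2[OF kN] by (intro mult_mono) auto
      qed
      finally show ?thesis by (simp add: mult.assoc)
    qed
    have T2': "(\<Sum>k\<in>R. 2 * Kf (a k) p * r) \<le> (\<Sum>k=1..N. 2 * Kf (a k) p * r)"
      unfolding R_def using Kf_nonneg ab p0 r
      by (intro sum_mono2) (auto intro!: mult_nonneg_nonneg)
    have T1': "4 / (1 - \<bar>a n\<bar>) \<le> (\<Sum>k=1..N. 4 / (1 - \<bar>a k\<bar>))"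
      using n ab by (intro member_le_sum) (auto simp: less_imp_le)
    have "\<bar>mustar x - lam n - \<gamma> n * ln (1 / r)\<bar> \<le> 2 * (2 * r / (1 - \<bar>a n\<bar>)) + (\<Sum>k=1..N. 2 * Kf (a k) p * r)"
      unfolding eq using T1 T2 T2' by linarith
    also have "2 * (2 * r / (1 - \<bar>a n\<bar>)) = (4 / (1 - \<bar>a n\<bar>)) * r" by simp
    also have "(\<Sum>k=1..N. 2 * Kf (a k) p * r) = (\<Sum>k=1..N. 2 * Kf (a k) p) * r" by (simp add: sum_distrib_right)
    also have "(4 / (1 - \<bar>a n\<bar>)) * r + (\<Sum>k=1..N. 2 * Kf (a k) p) * r
       = (4 / (1 - \<bar>a n\<bar>) + (\<Sum>k=1..N. 2 * Kf (a k) p)) * r" by (simp add: algebra_simps)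
    also have "\<dots> \<le> C * r"
    proof (rule mult_right_mono)
      show "4 / (1 - \<bar>a n\<bar>) + (\<Sum>k=1..N. 2 * Kf (a k) p) \<le> C"
        unfolding C_def sum.distrib using T1' by linarith
    qed (use r in simp)
    finally show ?thesis unfolding x_def .
  qed
  show ?thesis
  proof (intro exI[of _ C] conjI Cpos allI impI ballI)
    fix r n assume r: "0 < r \<and> r \<le> rho N a" and n: "n \<in> {1..N}"
    show "\<bar>mustar (a n + r) - lam n - \<gamma> n * ln (1 / r)\<bar> \<le> C * r"
      using main[OF n _ , of 1 r] r unfolding p_def by simp
    show "\<bar>mustar (a n - r) - lam n - \<gamma> n * ln (1 / r)\<bar> \<le> C * r"
      using main[OF n _ , of "-1" r] r unfolding p_def by simp
  qed
qed

end
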